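(* Let $t$ be a positive integer. For every finite chordal trigraph $H$ whose total graph $\mathcal T(H)$ has clique number at most $t+1$, every set $X\subseteq V(G_t)$ such that $G_t[X]$ is $H$-free, and every $u\in V(G_t)$, there exists a downward path $P_u$ from $u$ in $T_t$ such that $|V(P_u)\cap X|\le |V(H)|-1$.
   Context: A trigraph is $(V,E_B,E_R)$ with disjoint sets $E_B$ (black edges) and $E_R$ (red edges) of pairs of $V$; for $u\neq v$ the adjacency type of $uv$ is black, red, or non-edge. Its total graph is $(V,E_B\cup E_R)$; it is chordal if its total graph is chordal. $G[X]$ is the subtrigraph induced by $X$ (keeping black and red edges inside $X$). Two trigraphs are isomorphic if a bijection between vertex sets preserves all adjacency types; $G$ is $H$-free if no induced subtrigraph of $G$ is isomorphic to $H$. Construction of $G_t$ and $T_t$: a countably infinite trigraph $G_t$ and rooted tree $T_t$ on the same vertex set, partitioned into finite layers $L_0,L_1,\dots$ each inducing a left-to-right path of black edges. $L_0$ is a single vertex, the root of $T_t$. With $L_{\le i}=L_0\cup\dots\cup L_i$, layer $L_{i+1}$ is built (starting empty) as follows: for each $u\in L_i$ from left to right, let $N^\uparrow[u]:=(N_{\mathcal T(G_t)}(u)\cap L_{\le i-1})\cup\{u\}$; for every ordered pair $(B,R)$ of disjoint subsets of $N^\uparrow[u]$ with $|B\cup R|\le t$, append a new vertex $v_{B,R}$ at the right end of $L_{i+1}$, joined by a black edge to the previously rightmost vertex of $L_{i+1}$ (if any), make it a child of $u$ in $T_t$, and add black edges from $v_{B,R}$ to all of $B$ and red edges to all of $R$.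 A downward path from $u$ in $T_t$ is an infinite path $u_1u_2\dots$ in $T_t$ with $u_1=u$ and $u_i$ a child of $u_{i-1}$ for all $i>1$. *)

theory Defs
  imports Main
begin

text \<open>A trigraph is a triple (V, E_B, E_R): vertex set, black edges, red edges;
  edges are 2-element subsets of V.\<close>

type_synonym 'a trigraph = "'a set \<times> 'a set set \<times> 'a set set"

definition tverts :: "'a trigraph \<Rightarrow> 'a set" where "tverts G = fst G"
definition tblack :: "'a trigraph \<Rightarrow> 'a set set" where "tblack G = fst (snd G)"
definition tred :: "'a trigraph \<Rightarrow> 'a set set" where "tred G = snd (snd G)"

definition is_trigraph :: "'a trigraph \<Rightarrow> bool" where
  "is_trigraph G \<longleftrightarrow> tblack G \<inter> tred G = {} \<and>
     (\<forall>e \<in> tblack G \<union> tred G. \<exists>x y. x \<noteq> y \<and> x \<in> tverts G \<and> y \<in> tverts G \<and> e = {x, y})"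

definition total_edges :: "'a trigraph \<Rightarrow> 'a set set" where
  "total_edges G = tblack G \<union> tred G"

definition chordal_graph :: "'a set \<Rightarrow> 'a set set \<Rightarrow> bool" where
  "chordal_graph V E \<longleftrightarrow>
    (\<forall>cs. distinct cs \<and> length cs \<ge> 4 \<and> set cs \<subseteq> V \<and>
       (\<forall>i < length cs. {cs ! i, cs ! ((i + 1) mod length cs)} \<in> E) \<longrightarrow>
       (\<exists>i < length cs. \<exists>j < length cs. i \<noteq> j \<and>
          j \<noteq> (i + 1) mod length cs \<and> i \<noteq> (j + 1) mod length cs \<and>
          {cs ! i, cs ! j} \<in> E))"

definition chordal_trigraph :: "'a trigraph \<Rightarrow> bool" where
  "chordal_trigraph G \<longleftrightarrow> chordal_graph (tverts G) (total_edges G)"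

definition clique_number_le :: "'a set \<Rightarrow> 'a set set \<Rightarrow> nat \<Rightarrow> bool" where
  "clique_number_le V E k \<longleftrightarrow>
    (\<forall>K \<subseteq> V. finite K \<and> (\<forall>x\<in>K. \<forall>y\<in>K. x \<noteq> y \<longrightarrow> {x, y} \<in> E) \<longrightarrow> card K \<le> k)"

definition induced_sub :: "'a trigraph \<Rightarrow> 'a set \<Rightarrow> 'a trigraph" where
  "induced_sub G X = (X, {e \<in> tblack G. e \<subseteq> X}, {e \<in> tred G. e \<subseteq> X})"

definition trigraph_iso :: "'a trigraph \<Rightarrow> 'b trigraph \<Rightarrow> bool" where
  "trigraph_iso G H \<longleftrightarrow> (\<exists>f. bij_betw f (tverts G) (tverts H) \<and>
     (\<forall>a \<in> tverts G. \<forall>b \<in> tverts G. a \<noteq> b \<longrightarrow>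
        ({a, b} \<in> tblack G \<longleftrightarrow> {f a, f b} \<in> tblack H) \<and>
        ({a, b} \<in> tred G \<longleftrightarrow> {f a, f b} \<in> tred H)))"

definition H_free :: "'a trigraph \<Rightarrow> 'b trigraph \<Rightarrow> bool" where
  "H_free G H \<longleftrightarrow> \<not> (\<exists>Y \<subseteq> tverts G. trigraph_iso (induced_sub G Y) H)"

text \<open>The vertex set is the whole type 'v. lay v is the index of the layer of v,
  pos v its position (0-based, left to right) inside its layer, par v its parent in T_t
  (meaningless for the root), lab v = (B,R) the pair used to create v (meaningless for the root),
  EB and ER the black and red edges of G_t.\<close>

definition Nup :: "('v \<Rightarrow> nat) \<Rightarrow> 'v set set \<Rightarrow> 'v set set \<Rightarrow> 'v \<Rightarrow> 'v set" where
  "Nup lay EB ER u = {w. {u, w} \<in> EB \<union> ER \<and> lay w < lay u} \<union> {u}"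

definition admissible :: "nat \<Rightarrow> ('v \<Rightarrow> nat) \<Rightarrow> 'v set set \<Rightarrow> 'v set set \<Rightarrow> 'v \<Rightarrow> 'v set \<Rightarrow> 'v set \<Rightarrow> bool" where
  "admissible t lay EB ER u B R \<longleftrightarrow> B \<inter> R = {} \<and> B \<union> R \<subseteq> Nup lay EB ER u \<and>
     finite (B \<union> R) \<and> card (B \<union> R) \<le> t"

definition Gt_construction ::
  "nat \<Rightarrow> ('v \<Rightarrow> nat) \<Rightarrow> ('v \<Rightarrow> nat) \<Rightarrow> ('v \<Rightarrow> 'v) \<Rightarrow> ('v \<Rightarrow> 'v set \<times> 'v set)
     \<Rightarrow> 'v set set \<Rightarrow> 'v set set \<Rightarrow> bool" where
  "Gt_construction t lay pos par lab EB ER \<longleftrightarrow>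
     (\<exists>!r. lay r = 0) \<and>
     (\<forall>i. finite {v. lay v = i}) \<and>
     (\<forall>i. bij_betw pos {v. lay v = i} {..< card {v. lay v = i}}) \<and>
     (\<forall>v. 0 < lay v \<longrightarrow> Suc (lay (par v)) = lay v \<and>
          admissible t lay EB ER (par v) (fst (lab v)) (snd (lab v))) \<and>
     (\<forall>u B R. admissible t lay EB ER u B R \<longrightarrow>
          (\<exists>!v. 0 < lay v \<and> par v = u \<and> lab v = (B, R))) \<and>
     (\<forall>v w. 0 < lay v \<and> lay v = lay w \<and> pos (par v) < pos (par w) \<longrightarrow> pos v < pos w) \<and>
     EB = {{v, w} | v w. lay v = lay w \<and> pos w = Suc (pos v)}
          \<union> {{v, b} | v b. 0 < lay v \<and> b \<in> fst (lab v)} \<and>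
     ER = {{v, r} | v r. 0 < lay v \<and> r \<in> snd (lab v)}"

definition downward_path :: "('v \<Rightarrow> nat) \<Rightarrow> ('v \<Rightarrow> 'v) \<Rightarrow> 'v \<Rightarrow> (nat \<Rightarrow> 'v) \<Rightarrow> bool" where
  "downward_path lay par u p \<longleftrightarrow> p 0 = u \<and>
     (\<forall>i. lay (p (Suc i)) = Suc (lay (p i)) \<and> par (p (Suc i)) = p i)"

end

theory Submission
  imports Defs
begin

definition wfE :: "'a set set \<Rightarrow> bool" where
  "wfE E \<longleftrightarrow> (\<forall>e\<in>E. \<exists>x y. x \<noteq> y \<and> e = {x,y})"

lemma wfE_noloop: "wfE E \<Longrightarrow> {x} \<notin> E"
  unfolding wfE_def by (metis doubleton_eq_iff insert_absorb2)

fun walk :: "'a set set \<Rightarrow> 'a list \<Rightarrow> bool" where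
  "walk E [] = True"
| "walk E [x] = True"
| "walk E (x # y # zs) = ({x,y} \<in> E \<and> walk E (y # zs))"

lemma walk_Cons: "walk E (x # zs) \<longleftrightarrow> walk E zs \<and> (zs \<noteq> [] \<longrightarrow> {x, hd zs} \<in> E)"
  by (cases zs) auto

lemma walk_append:
  "walk E (xs @ ys) \<longleftrightarrow> walk E xs \<and> walk E ys \<and> (xs \<noteq> [] \<and> ys \<noteq> [] \<longrightarrow> {last xs, hd ys} \<in> E)"
proof (induction xs)
  case Nil
  then show ?case by simp
next
  case (Cons a xs)
  then show ?case by (cases xs) (auto simp: walk_Cons)
qed

lemma walk_nth: "walk E zs \<Longrightarrow> Suc i < length zs \<Longrightarrow> {zs!i, zs!Suc i} \<in> E"
proof (induction zs arbitrary: i rule: walk.induct)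
  case (3 E x y zs)
  then show ?case by (cases i) auto
qed auto

lemma walk_take: "walk E zs \<Longrightarrow> walk E (take n zs)"
  by (metis append_take_drop_id walk_append)

lemma walk_drop: "walk E zs \<Longrightarrow> walk E (drop n zs)"
  by (metis append_take_drop_id walk_append)

definition chordless :: "'a set set \<Rightarrow> 'a list \<Rightarrow> bool" where
  "chordless E zs \<longleftrightarrow> (\<forall>i j. Suc i < j \<and> j < length zs \<longrightarrow> {zs!i, zs!j} \<notin> E)"

lemma shortest_path:
  assumes w: "walk E zs" "zs \<noteq> []" "hd zs = x" "last zs = y" "set zs \<subseteq> C \<union> {x,y}"
  shows "\<exists>ws. walk E ws \<and> ws \<noteq> [] \<and> hd ws = x \<and> last ws = y \<and> set ws \<subseteq> C \<union> {x,y}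
            \<and> distinct ws \<and> chordless E ws"
proof -
  define P where "P ws \<longleftrightarrow> walk E ws \<and> ws \<noteq> [] \<and> hd ws = x \<and> last ws = y \<and> set ws \<subseteq> C \<union> {x,y}" for ws
  have "P zs" using w by (simp add: P_def)
  then obtain ws where Pws: "P ws" and minl: "\<And>vs. P vs \<Longrightarrow> length ws \<le> length vs"
    using ex_has_least_nat[of P zs length] by blast
  have ws: "walk E ws" "ws \<noteq> []" "hd ws = x" "last ws = y" "set ws \<subseteq> C \<union> {x,y}"
    using Pws by (auto simp: P_def)
  have hd0: "ws ! 0 = x" using ws by (simp add: hd_conv_nth)
  have lastn: "ws ! (length ws - 1) = y" using ws by (simp add: last_conv_nth)
  have dist: "distinct ws"
  proof (rule ccontr)
    assume "\<not> distinct ws"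
    then obtain i j where ij: "i < j" "j < length ws" "ws!i = ws!j"
      by (metis distinct_conv_nth linorder_neqE_nat)
    define vs where "vs = take (Suc i) ws @ drop (Suc j) ws"
    have ti: "take (Suc i) ws = take i ws @ [ws!i]" using ij by (simp add: take_Suc_conv_app_nth)
    have "P vs"
    proof -
      have "walk E vs"
      proof (cases "Suc j < length ws")
        case True
        have lt: "last (take (Suc i) ws) = ws!i" using ti by simp
        show ?thesis unfolding vs_def walk_append
          using walk_take[OF ws(1)] walk_drop[OF ws(1)] walk_nth[OF ws(1) True] ij lt True
          by (simp add: hd_drop_conv_nth)
      next
        case False
        then show ?thesis unfolding vs_def using ws(1) walk_take by simp
      qed
      moreover have "vs \<noteq> []" unfolding vs_def using ws(2) by simp
      moreover have "hd vs = x" unfolding vs_def using ti hd0 ij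
        by (cases i) (auto simp: hd_conv_nth nth_append)
      moreover have "last vs = y"
      proof (cases "Suc j < length ws")
        case True
        then show ?thesis unfolding vs_def using ws by simp
      next
        case False
        then have "j = length ws - 1" using ij by simp
        then show ?thesis unfolding vs_def using ti ij lastn by simp
      qed
      moreover have "set vs \<subseteq> C \<union> {x,y}" unfolding vs_def using ws(5)
        by (auto dest: in_set_takeD in_set_dropD)
      ultimately show ?thesis by (simp add: P_def)
    qed
    then have "length ws \<le> length vs" by (rule minl)
    moreover have "length vs < length ws" unfolding vs_def using ij by auto
    ultimately show False by simp
  qed
  have chl: "chordless E ws"
    unfolding chordless_def
  proof (intro allI impI)
    fix i j assume ij: "Suc i < j \<and> j < length ws"
    show "{ws!i, ws!j} \<notin> E"
    proof
      assume e: "{ws!i, ws!j} \<in> E"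
      define vs where "vs = take (Suc i) ws @ drop j ws"
      have ti: "take (Suc i) ws = take i ws @ [ws!i]" using ij by (simp add: take_Suc_conv_app_nth)
      have "P vs"
      proof -
        have lt: "last (take (Suc i) ws) = ws!i" using ti by simp
        have "walk E vs" unfolding vs_def walk_append
          using walk_take[OF ws(1)] walk_drop[OF ws(1)] ij lt e by (simp add: hd_drop_conv_nth)
        moreover have "vs \<noteq> []" unfolding vs_def using ws(2) by simp
        moreover have "hd vs = x" unfolding vs_def using ti hd0 ij
          by (cases i) (auto simp: hd_conv_nth nth_append)
        moreover have "last vs = y" unfolding vs_def using ws ij by simp
        moreover have "set vs \<subseteq> C \<union> {x,y}" unfolding vs_def using ws(5)
          by (auto dest: in_set_takeD in_set_dropD)
        ultimately show ?thesis by (simp add: P_def)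
      qed
      then have "length ws \<le> length vs" by (rule minl)
      moreover have "length vs < length ws" unfolding vs_def using ij by auto
      ultimately show False by simp
    qed
  qed
  show ?thesis using ws dist chl by blast
qed

lemma no_chordless_cycle:
  assumes ch: "chordal_graph V E"
  and wa: "walk E (x # ps @ [y])" and ca: "chordless E (x # ps @ [y])"
  and wb: "walk E (x # qs @ [y])" and cb: "chordless E (x # qs @ [y])" and qne: "qs \<noteq> []"
  and pne: "ps \<noteq> []"
  and dist: "distinct (x # ps @ y # rev qs)"
  and noedge: "\<forall>p\<in>set ps. \<forall>q\<in>set qs. {p,q} \<notin> E"
  and sub: "set (x # ps @ y # rev qs) \<subseteq> V"
  shows False
proof -
  define cs where "cs = x # ps @ y # rev qs"
  define A where "A = x # ps @ [y]"
  define B where "B = x # qs @ [y]"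
  define k where "k = length ps"
  define m where "m = length qs"
  define N where "N = k + m + 2"
  have m1: "m \<ge> 1" using qne by (cases qs) (auto simp: m_def)
  have k1: "k \<ge> 1" using pne by (cases ps) (auto simp: k_def)
  have lencs: "length cs = N" by (simp add: cs_def N_def k_def m_def)
  have lenA: "length A = k + 2" by (simp add: A_def k_def)
  have lenB: "length B = m + 2" by (simp add: B_def m_def)
  have csAB: "cs = A @ rev qs" by (simp add: cs_def A_def)
  have csA: "cs!i = A!i" if "i < k+2" for i
    using that unfolding csAB by (simp add: nth_append lenA)
  have csB: "cs!i = B!(N-i)" if "k+2 \<le> i" "i < N" for i
  proof -
    have "cs!i = rev qs ! (i - (k+2))" using that unfolding csAB by (simp add: nth_append lenA)
    also have "\<dots> = qs ! (m - Suc (i - (k+2)))"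
      using that by (simp add: rev_nth m_def N_def)
    also have "\<dots> = B ! (N - i)"
    proof -
      have "N - i = Suc (m - Suc (i - (k+2)))" using that by (simp add: N_def)
      moreover have "m - Suc (i - (k+2)) < m" using that m1 by (simp add: N_def)
      ultimately show ?thesis by (simp add: B_def nth_append m_def)
    qed
    finally show ?thesis .
  qed
  have A0: "A!0 = x" by (simp add: A_def)
  have B0: "B!0 = x" by (simp add: B_def)
  have Ak: "A!(k+1) = y" by (simp add: A_def k_def nth_append)
  have Bm: "B!(m+1) = y" by (simp add: B_def m_def nth_append)
  have Aps: "A!i \<in> set ps" if "1 \<le> i" "i \<le> k" for i
  proof -
    have "A!i = ps!(i-1)" using that by (cases i) (auto simp: A_def k_def nth_append)
    then show ?thesis using that by (simp add: k_def)
  qed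
  have Bqs: "B!i \<in> set qs" if "1 \<le> i" "i \<le> m" for i
  proof -
    have "B!i = qs!(i-1)" using that by (cases i) (auto simp: B_def m_def nth_append)
    then show ?thesis using that by (simp add: m_def)
  qed
  have cyc: "\<forall>i<length cs. {cs!i, cs!((i+1) mod length cs)} \<in> E"
  proof (intro allI impI)
    fix i assume i: "i < length cs"
    then have iN: "i < N" by (simp add: lencs)
    consider (a) "Suc i < k+2" | (b) "i = k+1" | (c) "k+2 \<le> i" "Suc i < N" | (d) "i = N - 1"
      using iN by linarith
    then show "{cs!i, cs!((i+1) mod length cs)} \<in> E"
    proof cases
      case a
      then have "(i+1) mod length cs = Suc i" using iN lencs by (simp add: N_def)
      then show ?thesis using a csA walk_nth[OF wa, of i] by (simp add: A_def[symmetric] lenA)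
    next
      case b
      then have "(i+1) mod length cs = k+2" using lencs m1 by (simp add: N_def)
      moreover have "cs!(k+2) = B!m" using csB[of "k+2"] m1 by (simp add: N_def)
      moreover have "{B!m, B!Suc m} \<in> E" using walk_nth[OF wb, of m] by (simp add: B_def[symmetric] lenB)
      ultimately show ?thesis using b csA[of "k+1"] Ak Bm by (simp add: insert_commute)
    next
      case c
      then have "(i+1) mod length cs = Suc i" using lencs by simp
      moreover have "cs!i = B!(N-i)" using c by (simp add: csB)
      moreover have "cs!Suc i = B!(N - Suc i)" using c by (simp add: csB)
      moreover have "{B!(N - Suc i), B!Suc (N - Suc i)} \<in> E"
        using walk_nth[OF wb, of "N - Suc i"] c by (simp add: B_def[symmetric] lenB N_def)
      moreover have "Suc (N - Suc i) = N - i" using c by simp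
      ultimately show ?thesis by (simp add: insert_commute)
    qed (use lencs m1 csB[of "N - 1"] walk_nth[OF wb, of 0] B0 csA[of 0] A0 in \<open>auto simp: B_def[symmetric] lenB N_def insert_commute\<close>)
  qed
  have key: "{cs!i, cs!j} \<notin> E" if ij: "i < j" "j < N" "j \<noteq> Suc i" "\<not> (i = 0 \<and> j = N - 1)" for i j
  proof (cases "j < k+2")
    case True
    then show ?thesis using ca ij csA unfolding chordless_def A_def[symmetric] lenA by auto
  next
    case jF: False
    show ?thesis
    proof (cases "k+2 \<le> i")
      case True
      have "Suc (N-j) < N-i" "N-i < length B" using ij True jF by (simp_all add: N_def lenB)
      then have "{B!(N-j), B!(N-i)} \<notin> E" using cb unfolding chordless_def B_def[symmetric] by blast
      then show ?thesis using csB ij True jF by (simp add: insert_commute)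
    next
      case iF: False
      have cj: "cs!j = B!(N-j)" using csB jF ij by simp
      consider (z) "i = 0" | (p) "1 \<le> i" "i \<le> k" | (y) "i = k+1" using iF by linarith
      then show ?thesis
      proof cases
        case z
        have "Suc 0 < N-j" "N-j < length B" using ij z jF by (simp_all add: N_def lenB)
        then have "{B!0, B!(N-j)} \<notin> E" using cb unfolding chordless_def B_def[symmetric] by blast
        then show ?thesis using z cj csA[of 0] A0 B0 by simp
      next
        case p
        have "cs!i \<in> set ps" using p csA Aps by simp
        moreover have "cs!j \<in> set qs" using cj Bqs jF ij by (simp add: N_def)
        ultimately show ?thesis using noedge by blast
      next
        case y
        have "Suc (N-j) < m+1" "m+1 < length B" using ij y jF by (simp_all add: N_def lenB)
        then have "{B!(N-j), B!(m+1)} \<notin> E" using cb unfolding chordless_def B_def[symmetric] by blast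
        then show ?thesis using y cj csA[of "k+1"] Ak Bm by (simp add: insert_commute)
      qed
    qed
  qed
  have "distinct cs" "4 \<le> length cs" "set cs \<subseteq> V"
    using dist sub k1 m1 lencs by (auto simp: cs_def N_def)
  then obtain i j where ij: "i < length cs" "j < length cs" "i \<noteq> j"
     "j \<noteq> (i + 1) mod length cs" "i \<noteq> (j + 1) mod length cs" "{cs!i, cs!j} \<in> E"
    using ch cyc unfolding chordal_graph_def by blast
  show False
  proof (cases "i < j")
    case True
    have "j \<noteq> Suc i" using ij True lencs by (metis Suc_lessI mod_less Suc_eq_plus1 less_trans_Suc)
    moreover have "\<not> (i = 0 \<and> j = N - 1)" using ij lencs by (metis Suc_eq_plus1 Suc_pred' gr_implies_not0 mod_self not_less0)
    ultimately show False using key[of i j] ij True lencs by simp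
  next
    case False
    then have ji: "j < i" using ij by simp
    have "i \<noteq> Suc j" using ij ji lencs by (metis Suc_lessI mod_less Suc_eq_plus1 less_trans_Suc)
    moreover have "\<not> (j = 0 \<and> i = N - 1)" using ij lencs by (metis Suc_eq_plus1 Suc_pred' gr_implies_not0 mod_self not_less0)
    ultimately show False using key[of j i] ij ji lencs by (simp add: insert_commute)
  qed
qed

lemma path_form:
  assumes "ws \<noteq> []" "hd ws = x" "last ws = y" "x \<noteq> y" "distinct ws" "set ws \<subseteq> C \<union> {x,y}"
  shows "\<exists>ps. ws = x # ps @ [y] \<and> set ps \<subseteq> C"
proof -
  obtain zs where ws: "ws = x # zs" using assms(1,2) by (cases ws) auto
  have "zs \<noteq> []" using ws assms(3,4) by auto
  then obtain ps where zs: "zs = ps @ [y]" using ws assms(3)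
    by (metis append_butlast_last_id last_ConsR)
  have "x \<notin> set ps" "y \<notin> set ps" using assms(5) ws zs by auto
  then have "set ps \<subseteq> C" using assms(6) ws zs by auto
  then show ?thesis using ws zs by blast
qed

lemma induced_path:
  assumes "walk E zs" "zs \<noteq> []" "hd zs = x" "last zs = y" "set zs \<subseteq> C \<union> {x,y}" "x \<noteq> y"
    "{x,y} \<notin> E"
  shows "\<exists>ps. walk E (x # ps @ [y]) \<and> chordless E (x # ps @ [y]) \<and> distinct (x # ps @ [y])
     \<and> set ps \<subseteq> C \<and> ps \<noteq> []"
proof -
  obtain ws where ws: "walk E ws" "ws \<noteq> []" "hd ws = x" "last ws = y" "set ws \<subseteq> C \<union> {x,y}"
            "distinct ws" "chordless E ws"
    using shortest_path[OF assms(1-5)] by blast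
  obtain ps where ps: "ws = x # ps @ [y]" "set ps \<subseteq> C"
    using path_form[OF ws(2,3,4) assms(6) ws(6,5)] by blast
  have "ps \<noteq> []" using ws(1) ps(1) assms(7) by auto
  then show ?thesis using ws ps by auto
qed

definition simplicial :: "'a set \<Rightarrow> 'a set set \<Rightarrow> 'a \<Rightarrow> bool" where
  "simplicial W E s \<longleftrightarrow> s \<in> W \<and> (\<forall>a\<in>W. \<forall>b\<in>W. a \<noteq> b \<and> {s,a} \<in> E \<and> {s,b} \<in> E \<longrightarrow> {a,b} \<in> E)"

definition clq :: "'a set \<Rightarrow> 'a set set \<Rightarrow> bool" where
  "clq Q E \<longleftrightarrow> (\<forall>a\<in>Q. \<forall>b\<in>Q. a \<noteq> b \<longrightarrow> {a,b} \<in> E)"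

lemma chordal_mono: "chordal_graph V E \<Longrightarrow> W \<subseteq> V \<Longrightarrow> chordal_graph W E"
  unfolding chordal_graph_def by blast

definition RS :: "'a set \<Rightarrow> 'a set set \<Rightarrow> 'a set \<Rightarrow> ('a \<times> 'a) set" where
  "RS W E S = {(p,q). p \<in> W - S \<and> q \<in> W - S \<and> {p,q} \<in> E}"

lemma rtr_sym: "(p,q) \<in> (RS W E S)\<^sup>* \<Longrightarrow> (q,p) \<in> (RS W E S)\<^sup>*"
proof -
  have "sym (RS W E S)" unfolding RS_def sym_def by (auto simp: insert_commute)
  then have "sym ((RS W E S)\<^sup>*)" by (rule sym_rtrancl)
  then show "(p,q) \<in> (RS W E S)\<^sup>* \<Longrightarrow> (q,p) \<in> (RS W E S)\<^sup>*" by (rule symD)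
qed

lemma rtr_in: "(p,q) \<in> (RS W E S)\<^sup>* \<Longrightarrow> p \<in> W - S \<Longrightarrow> q \<in> W - S"
  by (induction rule: rtrancl_induct) (auto simp: RS_def)

lemma rtr_walk:
  assumes "(p,q) \<in> (RS W E S)\<^sup>*"
  shows "\<exists>zs. zs \<noteq> [] \<and> hd zs = p \<and> last zs = q \<and> walk E zs \<and> set zs \<subseteq> {z. (p,z) \<in> (RS W E S)\<^sup>*}"
  using assms
proof (induction rule: rtrancl_induct)
  case base
  then show ?case by (intro exI[of _ "[p]"]) auto
next
  case (step b c)
  then obtain zs where zs: "zs \<noteq> []" "hd zs = p" "last zs = b" "walk E zs" "set zs \<subseteq> {z. (p,z) \<in> (RS W E S)\<^sup>*}"
    by blast
  have "{b,c} \<in> E" using step(2) by (simp add: RS_def)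
  then have "walk E (zs @ [c])" using zs by (simp add: walk_append)
  moreover have "set (zs @ [c]) \<subseteq> {z. (p,z) \<in> (RS W E S)\<^sup>*}"
    using zs(5) step(1,2) by auto
  ultimately show ?case using zs by (intro exI[of _ "zs @ [c]"]) auto
qed

lemma through:
  assumes "(c, z) \<in> (RS W E (S - {s}))\<^sup>*" "s \<in> S" "c \<in> W - S"
  shows "(c,z) \<in> (RS W E S)\<^sup>* \<or> (\<exists>a'. (c,a') \<in> (RS W E S)\<^sup>* \<and> {s,a'} \<in> E)"
  using assms(1)
proof (induction rule: rtrancl_induct)
  case base
  then show ?case by simp
next
  case (step z z')
  show ?case
  proof (cases "(c,z) \<in> (RS W E S)\<^sup>*")
    case cz: True
    have zin: "z \<in> W - S" using rtr_in[OF cz assms(3)] .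
    have e: "{z,z'} \<in> E" "z' \<in> W - (S - {s})" using step(2) by (auto simp: RS_def)
    show ?thesis
    proof (cases "z' = s")
      case True
      then show ?thesis using cz e by (auto simp: insert_commute)
    next
      case False
      then have "(z,z') \<in> RS W E S" using zin e by (auto simp: RS_def)
      then show ?thesis using cz by auto
    qed
  next
    case False
    then show ?thesis using step(3) by auto
  qed
qed

lemma sep_clique_aux:
  assumes ch: "chordal_graph W E"
  and xy: "x \<in> S" "y \<in> S" "x \<noteq> y" "{x,y} \<notin> E" "S \<subseteq> W"
  and C: "Ca \<subseteq> W - S" "Cb \<subseteq> W - S" "Ca \<inter> Cb = {}" "\<forall>p\<in>Ca. \<forall>q\<in>Cb. {p,q} \<notin> E"
  and wa: "zs \<noteq> []" "walk E zs" "set zs \<subseteq> Ca" "{x, hd zs} \<in> E" "{last zs, y} \<in> E"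
  and wb: "zs' \<noteq> []" "walk E zs'" "set zs' \<subseteq> Cb" "{x, hd zs'} \<in> E" "{last zs', y} \<in> E"
  shows False
proof -
  have xyC: "x \<notin> Ca" "y \<notin> Ca" "x \<notin> Cb" "y \<notin> Cb" using xy C by auto
  have w1: "walk E (x # zs @ [y])" using wa by (simp add: walk_append walk_Cons)
  have w2: "walk E (x # zs' @ [y])" using wb by (simp add: walk_append walk_Cons)
  obtain ps where ps: "walk E (x # ps @ [y])" "chordless E (x # ps @ [y])" "distinct (x # ps @ [y])"
     "set ps \<subseteq> Ca" "ps \<noteq> []"
    using induced_path[OF w1 _ _ _ _ xy(3,4), of Ca] wa(3) by auto
  obtain qs where qs: "walk E (x # qs @ [y])" "chordless E (x # qs @ [y])" "distinct (x # qs @ [y])"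
     "set qs \<subseteq> Cb" "qs \<noteq> []"
    using induced_path[OF w2 _ _ _ _ xy(3,4), of Cb] wb(3) by auto
  have "distinct (x # ps @ y # rev qs)"
    using ps(3,4) qs(3,4) C(3) xyC by auto
  moreover have "\<forall>p\<in>set ps. \<forall>q\<in>set qs. {p,q} \<notin> E" using ps(4) qs(4) C(4) by blast
  moreover have "set (x # ps @ y # rev qs) \<subseteq> W" using ps(4) qs(4) C(1,2) xy by auto
  ultimately show False
    using no_chordless_cycle[OF ch ps(1,2) qs(1,2,5) ps(5)] by blast
qed

lemma simplicial_exists:
  "finite W \<Longrightarrow> wfE E \<Longrightarrow> chordal_graph W E \<Longrightarrow> Q \<subseteq> W \<Longrightarrow> clq Q E \<Longrightarrow> W - Q \<noteq> {}
   \<Longrightarrow> \<exists>s\<in>W - Q. simplicial W E s"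
proof (induction "card W" arbitrary: W Q rule: less_induct)
  case less
  note fin = less.prems(1) and wf = less.prems(2) and ch = less.prems(3)
  show ?case
  proof (cases "clq W E")
    case True
    obtain s where "s \<in> W - Q" using less.prems(6) by blast
    moreover have "simplicial W E s" using True \<open>s \<in> W - Q\<close> unfolding clq_def simplicial_def by blast
    ultimately show ?thesis by blast
  next
    case False
    then obtain a b where ab: "a \<in> W" "b \<in> W" "a \<noteq> b" "{a,b} \<notin> E" unfolding clq_def by blast
    define sep where "sep S \<longleftrightarrow> S \<subseteq> W - {a,b} \<and> (a,b) \<notin> (RS W E S)\<^sup>*" for S
    have "RS W E (W - {a,b}) = {}"
    proof -
      have "{p,q} \<notin> E" if "p \<in> {a,b}" "q \<in> {a,b}" for p q
      proof (cases "p = q")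
        case True then show ?thesis using wfE_noloop[OF wf] by simp
      next
        case False then show ?thesis using that ab(4) by (auto simp: insert_commute)
      qed
      then show ?thesis unfolding RS_def by auto
    qed
    then have "sep (W - {a,b})" unfolding sep_def using ab(3) by simp
    then obtain S where sepS: "sep S" and minS: "\<And>S'. sep S' \<Longrightarrow> card S \<le> card S'"
      using ex_has_least_nat[of sep "W - {a,b}" card] by blast
    have SW: "S \<subseteq> W - {a,b}" and nab: "(a,b) \<notin> (RS W E S)\<^sup>*" using sepS by (auto simp: sep_def)
    have finS: "finite S" using SW fin finite_subset by blast
    define Ca where "Ca = {z. (a,z) \<in> (RS W E S)\<^sup>*}"
    define Cb where "Cb = {z. (b,z) \<in> (RS W E S)\<^sup>*}"
    have aWS: "a \<in> W - S" and bWS: "b \<in> W - S" using ab SW by auto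
    have CaW: "Ca \<subseteq> W - S" unfolding Ca_def using rtr_in[OF _ aWS] by blast
    have CbW: "Cb \<subseteq> W - S" unfolding Cb_def using rtr_in[OF _ bWS] by blast
    have aCa: "a \<in> Ca" and bCb: "b \<in> Cb" by (auto simp: Ca_def Cb_def)
    have disj: "Ca \<inter> Cb = {}"
    proof (rule ccontr)
      assume "Ca \<inter> Cb \<noteq> {}"
      then obtain z where "(a,z) \<in> (RS W E S)\<^sup>*" "(b,z) \<in> (RS W E S)\<^sup>*" by (auto simp: Ca_def Cb_def)
      then have "(a,b) \<in> (RS W E S)\<^sup>*" using rtr_sym by (metis rtrancl_trans)
      then show False using nab by simp
    qed
    have noed: "\<forall>p\<in>Ca. \<forall>q\<in>Cb. {p,q} \<notin> E"
    proof (intro ballI notI)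
      fix p q assume pq: "p \<in> Ca" "q \<in> Cb" "{p,q} \<in> E"
      then have "(p,q) \<in> RS W E S" using CaW CbW by (auto simp: RS_def)
      then have "(a,q) \<in> (RS W E S)\<^sup>*" using pq(1) by (auto simp: Ca_def)
      moreover have "(q,b) \<in> (RS W E S)\<^sup>*" using pq(2) rtr_sym by (auto simp: Cb_def)
      ultimately show False using nab by (metis rtrancl_trans)
    qed
    have closed: "q \<in> C" if "C = {z. (c,z) \<in> (RS W E S)\<^sup>*}" "p \<in> C" "q \<in> W - S" "{p,q} \<in> E"
       "C \<subseteq> W - S" for C c p q
    proof -
      have "p \<in> W - S" using that(2,5) by blast
      then have "(p,q) \<in> RS W E S" using that by (auto simp: RS_def)
      then show ?thesis using that by auto
    qed
    have P1: "(\<exists>a'\<in>Ca. {s,a'} \<in> E) \<and> (\<exists>b'\<in>Cb. {s,b'} \<in> E)" if sS: "s \<in> S" for s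
    proof -
      have "card (S - {s}) < card S" using sS finS by (meson card_Diff1_less)
      then have "\<not> sep (S - {s})" using minS by (meson not_le)
      then have conn: "(a,b) \<in> (RS W E (S - {s}))\<^sup>*" using SW unfolding sep_def by blast
      have 1: "\<exists>a'\<in>Ca. {s,a'} \<in> E"
        using through[OF conn sS aWS] nab by (auto simp: Ca_def)
      have "(b,a) \<in> (RS W E (S - {s}))\<^sup>*" using rtr_sym[OF conn] .
      then have "(b,a) \<in> (RS W E S)\<^sup>* \<or> (\<exists>a'. (b,a') \<in> (RS W E S)\<^sup>* \<and> {s,a'} \<in> E)"
        using through[OF _ sS bWS] by blast
      moreover have "(b,a) \<notin> (RS W E S)\<^sup>*" using nab rtr_sym by metis
      ultimately have 2: "\<exists>b'\<in>Cb. {s,b'} \<in> E" by (auto simp: Cb_def)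
      show ?thesis using 1 2 by blast
    qed
    have conn_walk: "\<exists>zs. zs \<noteq> [] \<and> hd zs = p \<and> last zs = q \<and> walk E zs \<and> set zs \<subseteq> C"
      if "C = {z. (c,z) \<in> (RS W E S)\<^sup>*}" "p \<in> C" "q \<in> C" for C c p q
    proof -
      have cp: "(c,p) \<in> (RS W E S)\<^sup>*" and cq: "(c,q) \<in> (RS W E S)\<^sup>*" using that by auto
      have pq: "(p,q) \<in> (RS W E S)\<^sup>*" using rtrancl_trans[OF rtr_sym[OF cp] cq] .
      obtain zs where zs: "zs \<noteq> []" "hd zs = p" "last zs = q" "walk E zs"
         "set zs \<subseteq> {z. (p,z) \<in> (RS W E S)\<^sup>*}" using rtr_walk[OF pq] by blast
      have "set zs \<subseteq> C"
      proof
        fix z assume "z \<in> set zs"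
        then have "(p,z) \<in> (RS W E S)\<^sup>*" using zs(5) by blast
        then have "(c,z) \<in> (RS W E S)\<^sup>*" using rtrancl_trans[OF cp] by blast
        then show "z \<in> C" using that(1) by simp
      qed
      then show ?thesis using zs by blast
    qed
    have Sclq: "clq S E"
      unfolding clq_def
    proof (intro ballI impI)
      fix x y assume xy: "x \<in> S" "y \<in> S" "x \<noteq> y"
      show "{x,y} \<in> E"
      proof (rule ccontr)
        assume nxy: "{x,y} \<notin> E"
        obtain a1 where a1: "a1 \<in> Ca" "{x,a1} \<in> E" using P1[OF xy(1)] by blast
        obtain a2 where a2: "a2 \<in> Ca" "{y,a2} \<in> E" using P1[OF xy(2)] by blast
        obtain b1 where b1: "b1 \<in> Cb" "{x,b1} \<in> E" using P1[OF xy(1)] by blast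
        obtain b2 where b2: "b2 \<in> Cb" "{y,b2} \<in> E" using P1[OF xy(2)] by blast
        obtain zs where zs: "zs \<noteq> []" "hd zs = a1" "last zs = a2" "walk E zs" "set zs \<subseteq> Ca"
          using conn_walk[OF Ca_def a1(1) a2(1)] by blast
        obtain zs' where zs': "zs' \<noteq> []" "hd zs' = b1" "last zs' = b2" "walk E zs'" "set zs' \<subseteq> Cb"
          using conn_walk[OF Cb_def b1(1) b2(1)] by blast
        have e1: "{x, hd zs} \<in> E" "{last zs, y} \<in> E" using zs a1 a2 by (simp_all add: insert_commute)
        have e2: "{x, hd zs'} \<in> E" "{last zs', y} \<in> E" using zs' b1 b2 by (simp_all add: insert_commute)
        have SW': "S \<subseteq> W" using SW by blast
        show False
          using sep_clique_aux[OF ch xy nxy SW' CaW CbW disj noed zs(1,4,5) e1 zs'(1,4,5) e2] .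
      qed
    qed
    have side: "\<exists>s\<in>W - Q. simplicial W E s" if C: "C = {z. (c,z) \<in> (RS W E S)\<^sup>*}" "C \<subseteq> W - S"
       "Q \<inter> C = {}" "d \<in> W - S" "d \<notin> C" "c \<in> C" for C c d
    proof -
      define W' where "W' = C \<union> S"
      have W'W: "W' \<subseteq> W" using C SW W'_def by auto
      have "d \<notin> W'" using C(4,5) W'_def by auto
      then have "W' \<subset> W" using W'W C(4) by blast
      then have "card W' < card W" using fin psubset_card_mono by blast
      moreover have "finite W'" using W'W fin finite_subset by blast
      moreover have "chordal_graph W' E" using chordal_mono[OF ch W'W] .
      moreover have "S \<subseteq> W'" by (simp add: W'_def)
      moreover have "W' - S \<noteq> {}" using C(6) C(2) W'_def by auto
      ultimately have "\<exists>s\<in>W' - S. simplicial W' E s"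
        using less.hyps[of W' S] wf Sclq by simp
      then obtain s where s: "s \<in> W' - S" "simplicial W' E s" by blast
      have sC: "s \<in> C" using s(1) W'_def by auto
      have "simplicial W E s"
        unfolding simplicial_def
      proof (intro conjI ballI impI)
        show "s \<in> W" using sC C(2) by auto
        fix p q assume pq: "p \<in> W" "q \<in> W" "p \<noteq> q \<and> {s,p} \<in> E \<and> {s,q} \<in> E"
        have "p \<in> W'" using closed[OF C(1) sC, of p] pq C(2) by (auto simp: W'_def)
        moreover have "q \<in> W'" using closed[OF C(1) sC, of q] pq C(2) by (auto simp: W'_def)
        ultimately show "{p,q} \<in> E" using s(2) pq unfolding simplicial_def by blast
      qed
      moreover have "s \<in> W - Q" using sC C(2,3) by auto
      ultimately show ?thesis by blast
    qed
    show ?thesis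
    proof (cases "Q \<inter> Ca = {}")
      case True
      show ?thesis using side[OF Ca_def CaW True bWS] disj bCb aCa by blast
    next
      case False
      then obtain q1 where q1: "q1 \<in> Q" "q1 \<in> Ca" by blast
      have "Q \<inter> Cb = {}"
      proof (rule ccontr)
        assume "Q \<inter> Cb \<noteq> {}"
        then obtain q2 where "q2 \<in> Q" "q2 \<in> Cb" by blast
        moreover have "q1 \<noteq> q2" using q1 \<open>q2 \<in> Cb\<close> disj by blast
        ultimately show False using q1 less.prems(5) noed unfolding clq_def by blast
      qed
      then show ?thesis using side[OF Cb_def CbW _ aWS] disj bCb aCa by blast
    qed
  qed
qed

lemma peo_exists:
  assumes "finite V" "wfE E" "chordal_graph V E"
  shows "\<exists>h. bij_betw h {..<card V} V \<and>
     (\<forall>j<card V. \<forall>i<j. \<forall>i'<j. {h i, h j} \<in> E \<and> {h i', h j} \<in> E \<and> i \<noteq> i' \<longrightarrow> {h i, h i'} \<in> E)"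
  using assms
proof (induction "card V" arbitrary: V)
  case 0
  then have "V = {}" by simp
  then show ?case by (simp add: bij_betw_def)
next
  case (Suc n)
  then have "V \<noteq> {}" by auto
  then obtain s where s: "s \<in> V" "simplicial V E s"
    using simplicial_exists[OF Suc.prems(1,2,3), of "{}"] by (auto simp: clq_def)
  define V' where "V' = V - {s}"
  have cV': "n = card V'" using Suc.hyps(2) s(1) Suc.prems(1) by (simp add: V'_def)
  obtain h' where h': "bij_betw h' {..<n} V'"
    "\<forall>j<n. \<forall>i<j. \<forall>i'<j. {h' i, h' j} \<in> E \<and> {h' i', h' j} \<in> E \<and> i \<noteq> i' \<longrightarrow> {h' i, h' i'} \<in> E"
    using Suc.hyps(1)[OF cV'] Suc.prems chordal_mono[OF Suc.prems(3), of V'] V'_def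
    by (metis Diff_subset cV' finite_Diff)
  define h where "h = h'(n := s)"
  have "bij_betw h {..<n} V'" using h' bij_betw_cong[of "{..<n}" h h'] by (simp add: h_def)
  then have "bij_betw h ({..<n} \<union> {n}) (V' \<union> {h n})"
    by (intro notIn_Un_bij_betw) (auto simp: h_def V'_def)
  moreover have "{..<n} \<union> {n} = {..<card V}" using Suc.hyps(2) by auto
  moreover have "V' \<union> {h n} = V" using s(1) by (auto simp: h_def V'_def)
  ultimately have bij: "bij_betw h {..<card V} V" by simp
  have "{h i, h i'} \<in> E" if "j < card V" "i < j" "i' < j" "{h i, h j} \<in> E" "{h i', h j} \<in> E" "i \<noteq> i'"
    for i i' j
  proof (cases "j < n")
    case True
    then show ?thesis using h'(2) that by (auto simp: h_def)
  next
    case False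
    then have j: "j = n" using that(1) Suc.hyps(2) by simp
    have "h i \<in> V" "h i' \<in> V" "h i \<noteq> h i'"
      using bij that j Suc.hyps(2) unfolding bij_betw_def inj_on_def by auto
    moreover have "{s, h i} \<in> E" "{s, h i'} \<in> E" using that j by (auto simp: h_def insert_commute)
    ultimately show ?thesis using s(2) unfolding simplicial_def by blast
  qed
  then show ?case using bij by blast
qed

definition childv :: "('v \<Rightarrow> nat) \<Rightarrow> ('v \<Rightarrow> 'v) \<Rightarrow> ('v \<Rightarrow> 'v set \<times> 'v set) \<Rightarrow> 'v \<Rightarrow> 'v set \<times> 'v set \<Rightarrow> 'v" where
  "childv lay par lab x L = (THE c. 0 < lay c \<and> par c = x \<and> lab c = L)"

primrec chainv :: "('v \<Rightarrow> nat) \<Rightarrow> ('v \<Rightarrow> 'v) \<Rightarrow> ('v \<Rightarrow> 'v set \<times> 'v set) \<Rightarrow> 'v \<Rightarrow> 'v set \<times> 'v set \<Rightarrow> nat \<Rightarrow> 'v" where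
  "chainv lay par lab x L 0 = x"
| "chainv lay par lab x L (Suc k) = childv lay par lab (chainv lay par lab x L k) L"

locale gtc =
  fixes t :: nat and lay pos :: "'v \<Rightarrow> nat" and par :: "'v \<Rightarrow> 'v" and lab :: "'v \<Rightarrow> 'v set \<times> 'v set"
    and EB ER :: "'v set set"
  assumes gt: "Gt_construction t lay pos par lab EB ER"
begin

lemma par_props: "0 < lay v \<Longrightarrow> Suc (lay (par v)) = lay v \<and> admissible t lay EB ER (par v) (fst (lab v)) (snd (lab v))"
  using gt unfolding Gt_construction_def by blast

lemma EB_eq: "EB = {{v, w} | v w. lay v = lay w \<and> pos w = Suc (pos v)}
          \<union> {{v, b} | v b. 0 < lay v \<and> b \<in> fst (lab v)}"
  using gt unfolding Gt_construction_def by blast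

lemma ER_eq: "ER = {{v, r} | v r. 0 < lay v \<and> r \<in> snd (lab v)}"
  using gt unfolding Gt_construction_def by blast

lemma child_ex1: "admissible t lay EB ER x B R \<Longrightarrow> \<exists>!c. 0 < lay c \<and> par c = x \<and> lab c = (B,R)"
  using gt unfolding Gt_construction_def by blast

lemma childv_props:
  assumes "admissible t lay EB ER x (fst L) (snd L)"
  shows "0 < lay (childv lay par lab x L) \<and> par (childv lay par lab x L) = x \<and> lab (childv lay par lab x L) = L
         \<and> lay (childv lay par lab x L) = Suc (lay x)"
proof -
  have "\<exists>!c. 0 < lay c \<and> par c = x \<and> lab c = L" using child_ex1[OF assms] by simp
  then have c: "0 < lay (childv lay par lab x L) \<and> par (childv lay par lab x L) = x \<and> lab (childv lay par lab x L) = L"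
    unfolding childv_def by (rule theI')
  then show ?thesis using par_props[of "childv lay par lab x L"] by auto
qed

lemma Nup_le: "w \<in> Nup lay EB ER x \<Longrightarrow> lay w \<le> lay x"
  unfolding Nup_def by auto

lemma lab_lower: "0 < lay v \<Longrightarrow> w \<in> fst (lab v) \<union> snd (lab v) \<Longrightarrow> lay w < lay v"
proof -
  assume v: "0 < lay v" and w: "w \<in> fst (lab v) \<union> snd (lab v)"
  have "Suc (lay (par v)) = lay v" "fst (lab v) \<union> snd (lab v) \<subseteq> Nup lay EB ER (par v)"
    using par_props[OF v] unfolding admissible_def by auto
  then show ?thesis using w Nup_le by fastforce
qed

lemma lab_in_Nup: "0 < lay v \<Longrightarrow> fst (lab v) \<union> snd (lab v) \<subseteq> Nup lay EB ER v"
proof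
  fix w assume v: "0 < lay v" and w: "w \<in> fst (lab v) \<union> snd (lab v)"
  have "lay w < lay v" using lab_lower[OF v w] .
  moreover have "{v,w} \<in> EB \<union> ER"
  proof (cases "w \<in> fst (lab v)")
    case True
    then have "{v,w} \<in> EB" unfolding EB_eq using v by blast
    then show ?thesis by simp
  next
    case False
    then have "w \<in> snd (lab v)" using w by simp
    then have "{v,w} \<in> ER" unfolding ER_eq using v by blast
    then show ?thesis by simp
  qed
  ultimately show "w \<in> Nup lay EB ER v" unfolding Nup_def by auto
qed

lemma EB_up:
  assumes "lay a < lay b"
  shows "{a,b} \<in> EB \<longleftrightarrow> 0 < lay b \<and> a \<in> fst (lab b)"
proof
  assume "{a,b} \<in> EB"
  then consider (l) v w where "{a,b} = {v,w}" "lay v = lay w"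
    | (e) v bb where "{a,b} = {v,bb}" "0 < lay v" "bb \<in> fst (lab v)"
    unfolding EB_eq by blast
  then show "0 < lay b \<and> a \<in> fst (lab b)"
  proof cases
    case l
    then have "lay a = lay b" by (auto simp: doubleton_eq_iff)
    then show ?thesis using assms by simp
  next
    case e
    then consider "a = v" "b = bb" | "a = bb" "b = v" by (auto simp: doubleton_eq_iff)
    then show ?thesis
    proof cases
      case 1
      then have "lay b < lay a" using lab_lower[OF e(2), of bb] e(3) by simp
      then show ?thesis using assms by simp
    next
      case 2
      then show ?thesis using e by simp
    qed
  qed
next
  assume "0 < lay b \<and> a \<in> fst (lab b)"
  then have "{b,a} \<in> EB" unfolding EB_eq by blast
  then show "{a,b} \<in> EB" by (simp add: insert_commute)
qed

lemma ER_up: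
  assumes "lay a < lay b"
  shows "{a,b} \<in> ER \<longleftrightarrow> 0 < lay b \<and> a \<in> snd (lab b)"
proof
  assume "{a,b} \<in> ER"
  then obtain v bb where e: "{a,b} = {v,bb}" "0 < lay v" "bb \<in> snd (lab v)"
    unfolding ER_eq by blast
  then consider "a = v" "b = bb" | "a = bb" "b = v" by (auto simp: doubleton_eq_iff)
  then show "0 < lay b \<and> a \<in> snd (lab b)"
  proof cases
    case 1
    then have "lay b < lay a" using lab_lower[OF e(2), of bb] e(3) by simp
    then show ?thesis using assms by simp
  next
    case 2
    then show ?thesis using e by simp
  qed
next
  assume "0 < lay b \<and> a \<in> snd (lab b)"
  then have "{b,a} \<in> ER" unfolding ER_eq by blast
  then show "{a,b} \<in> ER" by (simp add: insert_commute)
qed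

lemma chain_props:
  assumes adm: "admissible t lay EB ER x (fst L) (snd L)"
  shows "admissible t lay EB ER (chainv lay par lab x L k) (fst L) (snd L)
     \<and> lay (chainv lay par lab x L (Suc k)) = Suc (lay (chainv lay par lab x L k))
     \<and> par (chainv lay par lab x L (Suc k)) = chainv lay par lab x L k
     \<and> lab (chainv lay par lab x L (Suc k)) = L \<and> 0 < lay (chainv lay par lab x L (Suc k))"
proof (induction k)
  case 0
  then show ?case using adm childv_props[OF adm] by simp
next
  case (Suc k)
  let ?c = "chainv lay par lab x L (Suc k)"
  have a: "admissible t lay EB ER ?c (fst L) (snd L)"
  proof -
    have "lab ?c = L" "0 < lay ?c" using Suc.IH by auto
    then have "fst L \<union> snd L \<subseteq> Nup lay EB ER ?c" using lab_in_Nup[of ?c] by simp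
    then show ?thesis using adm unfolding admissible_def by blast
  qed
  then show ?case using childv_props[OF a] by simp
qed

lemma dpath_lay: "downward_path lay par u p \<Longrightarrow> lay (p k) = lay u + k"
  unfolding downward_path_def by (induction k) auto

end

locale emb = gtc t lay pos par lab EB ER
  for t :: nat and lay pos :: "'v \<Rightarrow> nat" and par :: "'v \<Rightarrow> 'v" and lab :: "'v \<Rightarrow> 'v set \<times> 'v set"
    and EB ER :: "'v set set" +
  fixes H :: "'w trigraph" and X :: "'v set" and u :: 'v and h :: "nat \<Rightarrow> 'w" and n :: nat
  assumes trig: "is_trigraph H"
  and hbij: "bij_betw h {..<n} (tverts H)"
  and peo: "\<forall>j<n. \<forall>i<j. \<forall>i'<j. {h i, h j} \<in> total_edges H \<and> {h i', h j} \<in> total_edges H \<and> i \<noteq> i'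
              \<longrightarrow> {h i, h i'} \<in> total_edges H"
  and small: "\<forall>j<n. card {i. i<j \<and> {h i, h j} \<in> total_edges H} \<le> t"
  and bad: "\<forall>p. downward_path lay par u p \<longrightarrow> \<not> (finite (range p \<inter> X) \<and> card (range p \<inter> X) \<le> n - 1)"
begin

definition Pi :: "nat \<Rightarrow> nat set" where "Pi j = {i. i < j \<and> {h i, h j} \<in> total_edges H}"
definition Bi :: "nat \<Rightarrow> nat set" where "Bi j = {i. i < j \<and> {h i, h j} \<in> tblack H}"
definition Ri :: "nat \<Rightarrow> nat set" where "Ri j = {i. i < j \<and> {h i, h j} \<in> tred H}"

lemma PiBR: "Pi j = Bi j \<union> Ri j"
  unfolding Pi_def Bi_def Ri_def total_edges_def by auto

lemma BRdisj: "Bi j \<inter> Ri j = {}"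
  using trig unfolding Bi_def Ri_def is_trigraph_def by auto

lemma Pi_sub: "Pi j \<subseteq> {..<j}" "Bi j \<subseteq> {..<j}" "Ri j \<subseteq> {..<j}"
  unfolding Pi_def Bi_def Ri_def by auto

definition inv :: "nat \<Rightarrow> (nat \<Rightarrow> 'v) \<Rightarrow> (nat \<Rightarrow> nat) \<Rightarrow> (nat \<Rightarrow> nat \<Rightarrow> 'v) \<Rightarrow> bool" where
  "inv m x d r \<longleftrightarrow> (\<forall>j<m. r j 0 = u
     \<and> (\<forall>k<d j. lay (r j (Suc k)) = Suc (lay (r j k)) \<and> par (r j (Suc k)) = r j k)
     \<and> r j (d j) = x j \<and> x j \<in> X
     \<and> (\<forall>k\<le>d j. r j k \<in> X \<longrightarrow> lay (r j k) \<in> lay ` x ` {..j})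
     \<and> (\<forall>i<j. lay (x i) \<noteq> lay (x j))
     \<and> x ` Pi j \<union> {x j} \<subseteq> Nup lay EB ER (x j)
     \<and> (0 < d j \<longrightarrow> lab (x j) = (x ` Bi j, x ` Ri j))
     \<and> (d j = 0 \<longrightarrow> Pi j = {}))"

lemma inv_lay:
  assumes "inv m x d r" "j < m" "k \<le> d j"
  shows "lay (r j k) = lay u + k"
  using assms(3)
proof (induction k)
  case 0
  then show ?case using assms(1,2) unfolding inv_def by auto
next
  case (Suc k)
  then show ?case using assms(1,2) unfolding inv_def by auto
qed

lemma inv_layx: "inv m x d r \<Longrightarrow> j < m \<Longrightarrow> lay (x j) = lay u + d j"
  using inv_lay[of m x d r j "d j"] unfolding inv_def by auto

lemma inv_inj: "inv m x d r \<Longrightarrow> inj_on x {..<m}"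
proof (rule inj_onI)
  fix i j assume I: "inv m x d r" and ij: "i \<in> {..<m}" "j \<in> {..<m}" "x i = x j"
  show "i = j"
  proof (rule ccontr)
    assume "i \<noteq> j"
    then consider "i < j" | "j < i" by linarith
    then show False
      using I ij unfolding inv_def by (cases; metis lessThan_iff)
  qed
qed

lemma inv_cong:
  assumes "inv m x d r" "\<forall>i<m. x' i = x i \<and> d' i = d i \<and> r' i = r i"
  shows "inv m x' d' r'"
proof -
  have ximg: "x' ` A = x ` A" if "A \<subseteq> {..<m}" for A
    using assms(2) that by (auto intro!: image_cong)
  show ?thesis
    unfolding inv_def
  proof (intro allI impI)
    fix j assume j: "j < m"
    have sub1: "Pi j \<subseteq> {..<m}" "Bi j \<subseteq> {..<m}" "Ri j \<subseteq> {..<m}" "{..j} \<subseteq> {..<m}"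
      using Pi_sub[of j] j by auto
    have e: "x' j = x j" "d' j = d j" "r' j = r j" using assms(2) j by auto
    have e2: "\<forall>i<j. x' i = x i" using assms(2) j by auto
    show "r' j 0 = u \<and>
         (\<forall>k<d' j. lay (r' j (Suc k)) = Suc (lay (r' j k)) \<and> par (r' j (Suc k)) = r' j k) \<and>
         r' j (d' j) = x' j \<and> x' j \<in> X \<and>
         (\<forall>k\<le>d' j. r' j k \<in> X \<longrightarrow> lay (r' j k) \<in> lay ` x' ` {..j}) \<and>
         (\<forall>i<j. lay (x' i) \<noteq> lay (x' j)) \<and>
         x' ` Pi j \<union> {x' j} \<subseteq> Nup lay EB ER (x' j) \<and>
         (0 < d' j \<longrightarrow> lab (x' j) = (x' ` Bi j, x' ` Ri j)) \<and> (d' j = 0 \<longrightarrow> Pi j = {})"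
      using assms(1) j unfolding inv_def e ximg[OF sub1(1)] ximg[OF sub1(2)] ximg[OF sub1(3)] ximg[OF sub1(4)]
      using e2 by simp
  qed
qed

lemma count_contra:
  assumes D: "downward_path lay par u D" and L: "\<forall>k. D k \<in> X \<longrightarrow> lay (D k) \<in> Lay"
    and fin: "finite Lay" and c: "card Lay \<le> n - 1"
  shows False
proof -
  let ?K = "{k. lay u + k \<in> Lay}"
  have Ksub: "?K \<subseteq> (\<lambda>l. l - lay u) ` Lay" by force
  have finK: "finite ?K" using finite_subset[OF Ksub] fin by blast
  have cK: "card ?K \<le> card Lay"
    using card_mono[OF finite_imageI[OF fin] Ksub] card_image_le[OF fin, of "\<lambda>l. l - lay u"] by linarith
  have sub: "range D \<inter> X \<subseteq> D ` ?K"
  proof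
    fix v assume "v \<in> range D \<inter> X"
    then obtain k where "v = D k" "D k \<in> X" by blast
    then have "lay (D k) \<in> Lay" using L by blast
    then have "lay u + k \<in> Lay" using dpath_lay[OF D, of k] by simp
    then show "v \<in> D ` ?K" using \<open>v = D k\<close> by blast
  qed
  have "finite (range D \<inter> X)" using finite_subset[OF sub] finK by blast
  moreover have "card (range D \<inter> X) \<le> n - 1"
    using card_mono[OF finite_imageI[OF finK] sub] card_image_le[OF finK, of D] cK c by linarith
  ultimately show False using bad D by blast
qed


lemma extend:
  assumes mn: "m < n" and I: "inv m x d r"
    and D: "downward_path lay par u D"
    and pre: "\<forall>k<s. D k \<in> X \<longrightarrow> lay (D k) \<in> lay ` x ` {..<m}"
    and labs: "\<forall>k\<ge>s. 0 < k \<longrightarrow> lab (D k) = (x ` Bi m, x ` Ri m)"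
    and s0: "s = 0 \<longrightarrow> Pi m = {}"
  shows "\<exists>x' d' r'. inv (Suc m) x' d' r'"
proof -
  define Lay where "Lay = lay ` x ` {..<m}"
  have finLay: "finite Lay" by (simp add: Lay_def)
  have "card Lay \<le> card {..<m}" unfolding Lay_def
    by (metis card_image_le finite_imageI finite_lessThan image_image)
  then have cLay: "card Lay \<le> n - 1" using mn by simp
  have ex: "\<exists>k. s \<le> k \<and> D k \<in> X \<and> lay (D k) \<notin> Lay"
  proof (rule ccontr)
    assume na: "\<not> (\<exists>k. s \<le> k \<and> D k \<in> X \<and> lay (D k) \<notin> Lay)"
    have "\<forall>k. D k \<in> X \<longrightarrow> lay (D k) \<in> Lay"
    proof (intro allI impI)
      fix k assume "D k \<in> X"
      then show "lay (D k) \<in> Lay" using na pre unfolding Lay_def by (cases "k < s") auto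
    qed
    then show False using count_contra[OF D _ finLay cLay] by blast
  qed
  define P where "P k \<longleftrightarrow> s \<le> k \<and> D k \<in> X \<and> lay (D k) \<notin> Lay" for k
  define k0 where "k0 = (LEAST k. P k)"
  have Pk0: "P k0" using LeastI_ex[of P] ex unfolding k0_def P_def by blast
  then have k0: "s \<le> k0" "D k0 \<in> X" "lay (D k0) \<notin> Lay" unfolding P_def by auto
  have k0min: "lay (D k) \<in> Lay" if "s \<le> k" "k < k0" "D k \<in> X" for k
    using not_less_Least[of k P] that unfolding k0_def P_def by blast
  define z where "z = D k0"
  define x' where "x' = x(m := z)"
  define d' where "d' = d(m := k0)"
  define r' where "r' = r(m := D)"
  have I': "inv m x' d' r'" by (rule inv_cong[OF I]) (simp add: x'_def d'_def r'_def)
  have ximg: "x' ` A = x ` A" if "A \<subseteq> {..<m}" for A using that by (auto simp: x'_def)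
  have LayS: "lay ` x' ` {..m} = insert (lay z) Lay"
  proof -
    have "{..m} = insert m {..<m}" by auto
    then have "x' ` {..m} = insert (x' m) (x' ` {..<m})" by simp
    then have "x' ` {..m} = insert z (x ` {..<m})" using ximg[of "{..<m}"] by (simp add: x'_def)
    then show ?thesis by (simp add: Lay_def)
  qed
  have laypos: "lay (D k) = lay u + k" for k using dpath_lay[OF D] .
  have Dz: "D 0 = u" "\<forall>k. lay (D (Suc k)) = Suc (lay (D k)) \<and> par (D (Suc k)) = D k"
    using D unfolding downward_path_def by auto
  have c1: "\<forall>k\<le>k0. D k \<in> X \<longrightarrow> lay (D k) \<in> lay ` x' ` {..m}"
  proof (intro allI impI)
    fix k assume k: "k \<le> k0" "D k \<in> X"
    show "lay (D k) \<in> lay ` x' ` {..m}"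
    proof (cases "k < s")
      case True then show ?thesis using pre k LayS unfolding Lay_def by auto
    next
      case False
      show ?thesis
      proof (cases "k = k0")
        case True then show ?thesis using LayS z_def by simp
      next
        case False
        then have "k < k0" using k by simp
        then show ?thesis using k0min[of k] \<open>\<not> k < s\<close> k LayS by simp
      qed
    qed
  qed
  have c2: "\<forall>i<m. lay (x' i) \<noteq> lay (x' m)"
  proof (intro allI impI)
    fix i assume "i < m"
    then have "lay (x i) \<in> Lay" unfolding Lay_def by blast
    then show "lay (x' i) \<noteq> lay (x' m)" using k0(3) \<open>i < m\<close> unfolding x'_def z_def by auto
  qed
  have c3: "x' ` Pi m \<union> {x' m} \<subseteq> Nup lay EB ER (x' m)"
  proof -
    have "x' m \<in> Nup lay EB ER (x' m)" unfolding Nup_def by simp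
    moreover have "x' ` Pi m \<subseteq> Nup lay EB ER (x' m)"
    proof (cases "Pi m = {}")
      case True then show ?thesis by simp
    next
      case False
      then have "0 < k0" using s0 k0(1) by auto
      then have lz: "lab z = (x ` Bi m, x ` Ri m)" "0 < lay z" using labs k0(1) laypos unfolding z_def by auto
      have "x ` Bi m \<union> x ` Ri m \<subseteq> Nup lay EB ER z" using lab_in_Nup[OF lz(2)] lz(1) by simp
      moreover have "x' ` Pi m = x ` Bi m \<union> x ` Ri m" using ximg[OF Pi_sub(1)[of m]] PiBR by auto
      ultimately show ?thesis by (simp add: x'_def)
    qed
    ultimately show ?thesis by simp
  qed
  have c4: "0 < d' m \<longrightarrow> lab (x' m) = (x' ` Bi m, x' ` Ri m)"
    using labs k0(1) ximg[OF Pi_sub(2)[of m]] ximg[OF Pi_sub(3)[of m]] unfolding x'_def d'_def z_def by auto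
  have c5: "d' m = 0 \<longrightarrow> Pi m = {}" using s0 k0(1) unfolding d'_def by auto
  have new: "r' m 0 = u
     \<and> (\<forall>k<d' m. lay (r' m (Suc k)) = Suc (lay (r' m k)) \<and> par (r' m (Suc k)) = r' m k)
     \<and> r' m (d' m) = x' m \<and> x' m \<in> X
     \<and> (\<forall>k\<le>d' m. r' m k \<in> X \<longrightarrow> lay (r' m k) \<in> lay ` x' ` {..m})
     \<and> (\<forall>i<m. lay (x' i) \<noteq> lay (x' m))
     \<and> x' ` Pi m \<union> {x' m} \<subseteq> Nup lay EB ER (x' m)
     \<and> (0 < d' m \<longrightarrow> lab (x' m) = (x' ` Bi m, x' ` Ri m))
     \<and> (d' m = 0 \<longrightarrow> Pi m = {})"
    using Dz c1 c2 c3 c4 c5 k0(2) unfolding r'_def d'_def x'_def z_def by simp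
  have "inv (Suc m) x' d' r'"
    unfolding inv_def
  proof (intro allI impI)
    fix j assume "j < Suc m"
    then consider "j < m" | "j = m" by linarith
    then show "r' j 0 = u \<and>
         (\<forall>k<d' j. lay (r' j (Suc k)) = Suc (lay (r' j k)) \<and> par (r' j (Suc k)) = r' j k) \<and>
         r' j (d' j) = x' j \<and> x' j \<in> X \<and>
         (\<forall>k\<le>d' j. r' j k \<in> X \<longrightarrow> lay (r' j k) \<in> lay ` x' ` {..j}) \<and>
         (\<forall>i<j. lay (x' i) \<noteq> lay (x' j)) \<and>
         x' ` Pi j \<union> {x' j} \<subseteq> Nup lay EB ER (x' j) \<and>
         (0 < d' j \<longrightarrow> lab (x' j) = (x' ` Bi j, x' ` Ri j)) \<and> (d' j = 0 \<longrightarrow> Pi j = {})"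
    proof cases
      case 1 then show ?thesis using I' unfolding inv_def by blast
    next
      case 2 then show ?thesis using new by simp
    qed
  qed
  then show ?thesis by blast
qed

end

context emb
begin

lemma step:
  assumes mn: "m < n" and I: "inv m x d r"
  shows "\<exists>x' d' r'. inv (Suc m) x' d' r'"
proof (cases "Pi m = {}")
  case True
  define L0 :: "'v set \<times> 'v set" where "L0 = ({}, {})"
  have adm0: "admissible t lay EB ER u (fst L0) (snd L0)"
    unfolding admissible_def L0_def Nup_def by simp
  define D where "D = chainv lay par lab u L0"
  have D: "downward_path lay par u D"
    unfolding downward_path_def D_def using chain_props[OF adm0] by simp
  have labs: "\<forall>k\<ge>0. 0 < k \<longrightarrow> lab (D k) = (x ` Bi m, x ` Ri m)"
  proof (intro allI impI)
    fix k :: nat assume "0 < k"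
    then obtain k' where "k = Suc k'" by (cases k) auto
    moreover have "Bi m = {}" "Ri m = {}" using True PiBR by auto
    ultimately show "lab (D k) = (x ` Bi m, x ` Ri m)"
      using chain_props[OF adm0, of k'] by (simp add: D_def L0_def)
  qed
  show ?thesis using extend[OF mn I D _ labs] True by simp
next
  case False
  have finP: "finite (Pi m)" using Pi_sub(1)[of m] finite_subset by blast
  define p where "p = Max (Pi m)"
  have pP: "p \<in> Pi m" using Max_in[OF finP False] p_def by simp
  then have pm: "p < m" unfolding Pi_def by simp
  have injx: "inj_on x {..<m}" using inv_inj[OF I] .
  have Ip: "r p 0 = u"
     "\<forall>k<d p. lay (r p (Suc k)) = Suc (lay (r p k)) \<and> par (r p (Suc k)) = r p k"
     "r p (d p) = x p"
     "\<forall>k\<le>d p. r p k \<in> X \<longrightarrow> lay (r p k) \<in> lay ` x ` {..p}"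
     "x ` Pi p \<union> {x p} \<subseteq> Nup lay EB ER (x p)"
    using I pm unfolding inv_def by auto
  define y where "y = x p"
  define L where "L = (x ` Bi m, x ` Ri m)"
  have adm: "admissible t lay EB ER y (fst L) (snd L)"
    unfolding admissible_def
  proof (intro conjI)
    have "x ` Bi m \<inter> x ` Ri m = x ` (Bi m \<inter> Ri m)"
      using inj_on_image_Int[OF injx] Pi_sub(2,3)[of m] by auto
    then show "fst L \<inter> snd L = {}" using BRdisj by (simp add: L_def)
  next
    have "x i \<in> Nup lay EB ER y" if i: "i \<in> Pi m" for i
    proof (cases "i = p")
      case True then show ?thesis using Ip(5) y_def by auto
    next
      case False
      have "i \<le> p" using Max_ge[OF finP i] p_def by simp
      then have ip: "i < p" using False by simp
      have "{h i, h p} \<in> total_edges H"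
        using peo mn i pP False unfolding Pi_def by blast
      then have "i \<in> Pi p" using ip by (simp add: Pi_def)
      then show ?thesis using Ip(5) y_def by auto
    qed
    then have "x ` Pi m \<subseteq> Nup lay EB ER y" by blast
    then show "fst L \<union> snd L \<subseteq> Nup lay EB ER y" using PiBR by (auto simp: L_def)
  next
    have "finite (Bi m)" "finite (Ri m)" using Pi_sub(2,3)[of m] finite_subset finite_lessThan by blast+
    then show "finite (fst L \<union> snd L)" by (simp add: L_def)
  next
    have "card (x ` Pi m) \<le> card (Pi m)" using card_image_le finP by blast
    also have "\<dots> \<le> t" using small mn unfolding Pi_def by blast
    finally show "card (fst L \<union> snd L) \<le> t" using PiBR by (simp add: L_def image_Un)
  qed
  define C where "C = chainv lay par lab y L"
  define D where "D = (\<lambda>k. if k \<le> d p then r p k else C (k - d p))"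
  have Cp: "\<And>k. lay (C (Suc k)) = Suc (lay (C k)) \<and> par (C (Suc k)) = C k \<and> lab (C (Suc k)) = L"
    using chain_props[OF adm] unfolding C_def by simp
  have C0: "C 0 = y" by (simp add: C_def)
  have Dst: "lay (D (Suc k)) = Suc (lay (D k)) \<and> par (D (Suc k)) = D k" for k
  proof (cases "Suc k \<le> d p")
    case True then show ?thesis using Ip(2) by (simp add: D_def)
  next
    case F: False
    show ?thesis
    proof (cases "k = d p")
      case True
      then show ?thesis using Cp[of 0] C0 Ip(3) y_def by (simp add: D_def)
    next
      case False
      then have "Suc k - d p = Suc (k - d p)" "\<not> k \<le> d p" using F by auto
      then show ?thesis using Cp[of "k - d p"] F by (simp add: D_def)
    qed
  qed
  have D: "downward_path lay par u D"
    unfolding downward_path_def using Dst Ip(1) by (simp add: D_def)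
  have pre: "\<forall>k<Suc (d p). D k \<in> X \<longrightarrow> lay (D k) \<in> lay ` x ` {..<m}"
  proof (intro allI impI)
    fix k assume k: "k < Suc (d p)" "D k \<in> X"
    then have "lay (r p k) \<in> lay ` x ` {..p}" using Ip(4) by (simp add: D_def)
    moreover have "{..p} \<subseteq> {..<m}" using pm by auto
    ultimately show "lay (D k) \<in> lay ` x ` {..<m}" using k by (auto simp: D_def)
  qed
  have labs: "\<forall>k\<ge>Suc (d p). 0 < k \<longrightarrow> lab (D k) = (x ` Bi m, x ` Ri m)"
  proof (intro allI impI)
    fix k assume k: "Suc (d p) \<le> k" "0 < k"
    then have "k - d p = Suc (k - Suc (d p))" by simp
    then show "lab (D k) = (x ` Bi m, x ` Ri m)" using k Cp[of "k - Suc (d p)"] L_def by (simp add: D_def)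
  qed
  show ?thesis using extend[OF mn I D pre labs] by simp
qed

lemma inv_exists: "m \<le> n \<Longrightarrow> \<exists>x d r. inv m x d r"
proof (induction m)
  case 0
  then show ?case unfolding inv_def by simp
next
  case (Suc m)
  then obtain x d r where "inv m x d r" by auto
  then show ?case using step[of m x d r] Suc.prems by auto
qed

end

context emb
begin

lemma adj:
  assumes I: "inv n x d r" and ij: "i < j" "j < n"
  shows "({x i, x j} \<in> EB \<longleftrightarrow> {h i, h j} \<in> tblack H) \<and> ({x i, x j} \<in> ER \<longleftrightarrow> {h i, h j} \<in> tred H)"
proof -
  have inj: "inj_on x {..<n}" using inv_inj[OF I] .
  have mem: "x a \<in> x ` A \<longleftrightarrow> a \<in> A" if "a < n" "A \<subseteq> {..<n}" for a A
    using inj_on_image_mem_iff[OF inj, of a A] that by simp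
  have subs: "Bi k \<subseteq> {..<n}" "Ri k \<subseteq> {..<n}" if "k < n" for k
    using Pi_sub(2,3)[of k] that by auto
  have ne: "lay (x i) \<noteq> lay (x j)" using I ij unfolding inv_def by auto
  have li: "lay (x i) = lay u + d i" using inv_layx[OF I] ij by simp
  have lj: "lay (x j) = lay u + d j" using inv_layx[OF I] ij by simp
  show ?thesis
  proof (cases "lay (x i) < lay (x j)")
    case True
    then have "0 < d j" using li lj by simp
    then have lb: "lab (x j) = (x ` Bi j, x ` Ri j)" using I ij unfolding inv_def by auto
    have "x i \<in> x ` Bi j \<longleftrightarrow> i \<in> Bi j"
      using mem[of i "Bi j"] subs[of j] ij by auto
    moreover have "x i \<in> x ` Ri j \<longleftrightarrow> i \<in> Ri j"
      using mem[of i "Ri j"] subs[of j] ij by auto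
    moreover have "0 < lay (x j)" using True by simp
    ultimately show ?thesis using EB_up[OF True] ER_up[OF True] lb ij by (simp add: Bi_def Ri_def)
  next
    case False
    then have lt: "lay (x j) < lay (x i)" using ne by simp
    then have "0 < d i" using li lj by simp
    then have lb: "lab (x i) = (x ` Bi i, x ` Ri i)" using I ij unfolding inv_def by auto
    have nb: "x j \<notin> x ` Bi i"
    proof
      assume "x j \<in> x ` Bi i"
      then have "j \<in> Bi i" using mem[of j "Bi i"] subs[of i] ij by auto
      then show False using ij unfolding Bi_def by simp
    qed
    have nr: "x j \<notin> x ` Ri i"
    proof
      assume "x j \<in> x ` Ri i"
      then have "j \<in> Ri i" using mem[of j "Ri i"] subs[of i] ij by auto
      then show False using ij unfolding Ri_def by simp
    qed
    have g1: "{x i, x j} \<notin> EB" using EB_up[OF lt] lb nb by (simp add: insert_commute)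
    have g2: "{x i, x j} \<notin> ER" using ER_up[OF lt] lb nr by (simp add: insert_commute)
    have hH: "{h i, h j} \<notin> tblack H \<and> {h i, h j} \<notin> tred H"
    proof (rule ccontr)
      assume "\<not> ({h i, h j} \<notin> tblack H \<and> {h i, h j} \<notin> tred H)"
      then have "{h i, h j} \<in> total_edges H" unfolding total_edges_def by auto
      then have "i \<in> Pi j" using ij by (simp add: Pi_def)
      then have "x i \<in> Nup lay EB ER (x j)" using I ij unfolding inv_def by blast
      then show False using Nup_le lt by fastforce
    qed
    show ?thesis using g1 g2 hH by simp
  qed
qed

lemma final:
  assumes I: "inv n x d r"
  shows "\<exists>Y\<subseteq>tverts (induced_sub (UNIV, EB, ER) X). trigraph_iso (induced_sub (induced_sub (UNIV, EB, ER) X) Y) H"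
proof -
  define Y where "Y = x ` {..<n}"
  have inj: "inj_on x {..<n}" using inv_inj[OF I] .
  have YX: "Y \<subseteq> X" using I unfolding Y_def inv_def by auto
  define f where "f = h \<circ> the_inv_into {..<n} x"
  have b1: "bij_betw x {..<n} Y" using inj unfolding Y_def by (simp add: bij_betw_imageI)
  have b2: "bij_betw (the_inv_into {..<n} x) Y {..<n}" using bij_betw_the_inv_into[OF b1] .
  have bf: "bij_betw f Y (tverts H)" unfolding f_def using bij_betw_trans[OF b2 hbij] .
  have fx: "f (x i) = h i" if "i < n" for i using the_inv_into_f_f[OF inj] that by (simp add: f_def)
  let ?G = "induced_sub (induced_sub (UNIV, EB, ER) X) Y"
  have tv: "tverts ?G = Y" by (simp add: induced_sub_def tverts_def)
  have tb: "tblack ?G = {e \<in> EB. e \<subseteq> X \<and> e \<subseteq> Y}" by (auto simp: induced_sub_def tblack_def)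
  have tr: "tred ?G = {e \<in> ER. e \<subseteq> X \<and> e \<subseteq> Y}" by (auto simp: induced_sub_def tred_def)
  have "trigraph_iso ?G H"
    unfolding trigraph_iso_def
  proof (intro exI conjI ballI impI)
    show "bij_betw f (tverts ?G) (tverts H)" using bf tv by simp
  next
    fix a b assume a: "a \<in> tverts ?G" and b: "b \<in> tverts ?G" and ab: "a \<noteq> b"
    obtain i where i: "i < n" "a = x i" using a tv Y_def by auto
    obtain j where j: "j < n" "b = x j" using b tv Y_def by auto
    have sub: "{a,b} \<subseteq> X \<and> {a,b} \<subseteq> Y" using a b tv YX by auto
    have ij: "i \<noteq> j" using ab i j by auto
    have key: "({a,b} \<in> EB \<longleftrightarrow> {f a, f b} \<in> tblack H) \<and> ({a,b} \<in> ER \<longleftrightarrow> {f a, f b} \<in> tred H)"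
    proof (cases "i < j")
      case True then show ?thesis using adj[OF I True j(1)] i j fx by simp
    next
      case False
      then have "j < i" using ij by simp
      then show ?thesis using adj[OF I _ i(1), of j] i j fx by (simp add: insert_commute)
    qed
    show "({a, b} \<in> tblack ?G) = ({f a, f b} \<in> tblack H)" using key sub tb by auto
    show "({a, b} \<in> tred ?G) = ({f a, f b} \<in> tred H)" using key sub tr by auto
  qed
  moreover have "Y \<subseteq> tverts (induced_sub (UNIV, EB, ER) X)" using YX by (simp add: induced_sub_def tverts_def)
  ultimately show ?thesis by blast
qed

end

theorem lemma4p5:
  fixes t :: nat
    and lay pos :: "'v \<Rightarrow> nat" and par :: "'v \<Rightarrow> 'v" and lab :: "'v \<Rightarrow> 'v set \<times> 'v set"
    and EB ER :: "'v set set"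
    and H :: "'w trigraph"
    and X :: "'v set" and u :: 'v
  assumes "t \<ge> 1"
    and "Gt_construction t lay pos par lab EB ER"
    and "is_trigraph H" and "finite (tverts H)"
    and "chordal_trigraph H"
    and "clique_number_le (tverts H) (total_edges H) (t + 1)"
    and "H_free (induced_sub (UNIV, EB, ER) X) H"
  shows "\<exists>p. downward_path lay par u p \<and> finite (range p \<inter> X) \<and>
           card (range p \<inter> X) \<le> card (tverts H) - 1"
proof (rule ccontr)
  assume nc: "\<not> (\<exists>p. downward_path lay par u p \<and> finite (range p \<inter> X) \<and>
           card (range p \<inter> X) \<le> card (tverts H) - 1)"
  define n where "n = card (tverts H)"
  have wf: "wfE (total_edges H)" using assms(3) unfolding is_trigraph_def wfE_def total_edges_def by blast
  have ch: "chordal_graph (tverts H) (total_edges H)" using assms(5) unfolding chordal_trigraph_def .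
  obtain h where hb: "bij_betw h {..<n} (tverts H)" and
    hp: "\<forall>j<n. \<forall>i<j. \<forall>i'<j. {h i, h j} \<in> total_edges H \<and> {h i', h j} \<in> total_edges H \<and> i \<noteq> i'
              \<longrightarrow> {h i, h i'} \<in> total_edges H"
    using peo_exists[OF assms(4) wf ch] unfolding n_def by blast
  have injh: "inj_on h {..<n}" using hb bij_betw_def by blast
  have small: "\<forall>j<n. card {i. i<j \<and> {h i, h j} \<in> total_edges H} \<le> t"
  proof (intro allI impI)
    fix j assume j: "j < n"
    define P where "P = {i. i<j \<and> {h i, h j} \<in> total_edges H}"
    define K where "K = h ` P \<union> {h j}"
    have Pn: "P \<subseteq> {..<n}" using j by (auto simp: P_def)
    have finP: "finite P" using Pn finite_subset by blast
    have KV: "K \<subseteq> tverts H" using hb Pn j unfolding K_def bij_betw_def by auto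
    have finK: "finite K" using finP by (simp add: K_def)
    have clq: "\<forall>a\<in>K. \<forall>b\<in>K. a \<noteq> b \<longrightarrow> {a, b} \<in> total_edges H"
    proof (intro ballI impI)
      fix a b assume a: "a \<in> K" and b: "b \<in> K" and ab: "a \<noteq> b"
      consider (pp) i i' where "i \<in> P" "i' \<in> P" "a = h i" "b = h i'"
        | (pj) i where "i \<in> P" "a = h i" "b = h j"
        | (jp) i where "i \<in> P" "a = h j" "b = h i"
        | (jj) "a = h j" "b = h j"
        using a b unfolding K_def by blast
      then show "{a, b} \<in> total_edges H"
      proof cases
        case pp
        then have "i \<noteq> i'" using ab by auto
        then show ?thesis using hp j pp unfolding P_def by blast
      next
        case pj then show ?thesis unfolding P_def by simp
      next
        case jp then show ?thesis unfolding P_def by (simp add: insert_commute)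
      next
        case jj then show ?thesis using ab by simp
      qed
    qed
    have cK: "card K \<le> t + 1" using assms(6) KV finK clq unfolding clique_number_le_def by blast
    have "h j \<notin> h ` P"
    proof
      assume "h j \<in> h ` P"
      then obtain i where "i \<in> P" "h i = h j" by auto
      then have "i = j" using injh Pn j unfolding inj_on_def by blast
      then show False using \<open>i \<in> P\<close> by (simp add: P_def)
    qed
    then have "card K = card (h ` P) + 1" using finP by (simp add: K_def)
    moreover have "card (h ` P) = card P" using card_image[OF inj_on_subset[OF injh Pn]] .
    ultimately show "card {i. i<j \<and> {h i, h j} \<in> total_edges H} \<le> t" using cK by (simp add: P_def)
  qed
  have bad: "\<forall>p. downward_path lay par u p \<longrightarrow> \<not> (finite (range p \<inter> X) \<and> card (range p \<inter> X) \<le> n - 1)"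
    using nc unfolding n_def by blast
  interpret E: emb t lay pos par lab EB ER H X u h n
    by unfold_locales (use assms(2,3) hb hp small bad in auto)
  obtain x d r where "E.inv n x d r" using E.inv_exists by blast
  then obtain Y where "Y \<subseteq> tverts (induced_sub (UNIV, EB, ER) X)"
    "trigraph_iso (induced_sub (induced_sub (UNIV, EB, ER) X) Y) H" using E.final by blast
  then show False using assms(7) unfolding H_free_def by blast
qed

end
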